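(* Consider Bertrand Competition with $n\ge 2$ firms, integer price floor $L\ge 2$ and integer reservation value $H>L$: each firm chooses an integer price in $\{L,\dots,H\}$; the firms choosing the lowest price $s$ split the sales equally, each such firm receiving $s/k$ where $k$ is the number of firms choosing $s$, and all other firms receive $0$. Cooperation means choosing $H$. Let $\beta\in[0,1]$ and $t\ge 0$, and define $f(n)=\sum_{k=0}^{n-1}\beta^k(1-\beta)^{n-1-k}\binom{n-1}{k}\frac{1}{n-k}$. Then cooperation for firm $i$ is consistent with type $(t,\beta)$ if and only if $$t\ \ge\ \max\big(\beta^{n-1}(H-1),\, f(n)L\big)-\beta^{n-1}H/n.$$
   Context: A pure strategy $s_i$ is consistent with a tolerance $t\ge 0$ and a mixed strategy profile $\sigma_{-i}$ of the other players if $u_i(s_i',\sigma_{-i})\le u_i(s_i,\sigma_{-i})+t$ for every pure strategy $s_i'$ of player $i$ (utilities extended by linearity). Cooperation is consistent with type $(t,\beta)$ for player $i$ if cooperation is consistent with $t$ and the profile $\sigma_{-i}$ in which each other firm independently plays $H$ (cooperation) with probability $\beta$ and $L$ (its Nash equilibrium action) with probability $1-\beta$. *)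

theory Defs
  imports Complex_Main "HOL-Library.FuncSet"
begin

definition bertrand_payoff :: "nat \<Rightarrow> (nat \<Rightarrow> int) \<Rightarrow> nat \<Rightarrow> real" where
  "bertrand_payoff n p i =
     (let s = Min (p ` {..<n}); k = card {j \<in> {..<n}. p j = s}
      in if p i = s then real_of_int s / real k else 0)"

definition exp_payoff :: "nat \<Rightarrow> int \<Rightarrow> int \<Rightarrow> real \<Rightarrow> nat \<Rightarrow> int \<Rightarrow> real" where
  "exp_payoff n L H beta i x =
     (\<Sum>q \<in> Pi\<^sub>E ({..<n} - {i}) (\<lambda>_. {L, H}).
        (\<Prod>j \<in> {..<n} - {i}. if q j = H then beta else 1 - beta)
        * bertrand_payoff n (q(i := x)) i)"

definition consistent :: "nat \<Rightarrow> int \<Rightarrow> int \<Rightarrow> real \<Rightarrow> real \<Rightarrow> nat \<Rightarrow> int \<Rightarrow> bool" where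
  "consistent n L H t beta i x \<longleftrightarrow>
     (\<forall>y \<in> {L..H}. exp_payoff n L H beta i y \<le> exp_payoff n L H beta i x + t)"

definition coop_consistent :: "nat \<Rightarrow> int \<Rightarrow> int \<Rightarrow> real \<Rightarrow> real \<Rightarrow> nat \<Rightarrow> bool" where
  "coop_consistent n L H t beta i \<longleftrightarrow> consistent n L H t beta i H"

definition fB :: "real \<Rightarrow> nat \<Rightarrow> real" where
  "fB beta n = (\<Sum>k=0..n-1. beta ^ k * (1 - beta) ^ (n - 1 - k) * real ((n - 1) choose k)
                               * (1 / real (n - k)))"

end

theory Submission imports Defs begin

definition phi :: "nat set \<Rightarrow> int \<Rightarrow> int \<Rightarrow> nat set \<Rightarrow> nat \<Rightarrow> int" where
  "phi A L H S = (\<lambda>j. if j \<in> A then (if j \<in> S then H else L) else undefined)"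

lemma PiE_eq_phi:
  assumes "L \<noteq> H"
  shows "Pi\<^sub>E A (\<lambda>_. {L, H}) = phi A L H ` Pow A" (is "?P = ?Q")
proof
  show "?Q \<subseteq> ?P" by (auto simp: phi_def PiE_def extensional_def)
  show "?P \<subseteq> ?Q"
  proof
    fix q assume q: "q \<in> ?P"
    have "q = phi A L H {j \<in> A. q j = H}"
      using q assms by (auto simp: phi_def PiE_def extensional_def fun_eq_iff)
    thus "q \<in> ?Q" by blast
  qed
qed

lemma inj_phi:
  assumes "L \<noteq> H"
  shows "inj_on (phi A L H) (Pow A)"
proof (rule inj_onI)
  fix S T assume "S \<in> Pow A" "T \<in> Pow A" "phi A L H S = phi A L H T"
  then show "S = T" using assms unfolding phi_def fun_eq_iff
    by (metis (full_types) PowD subset_iff subset_antisym)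
qed

lemma weight:
  assumes "finite A" "S \<subseteq> A" "L \<noteq> H"
  shows "(\<Prod>j \<in> A. if phi A L H S j = H then beta else 1 - beta)
       = beta ^ card S * (1 - beta) ^ (card A - card S)"
proof -
  have "(\<Prod>j \<in> A. if phi A L H S j = H then beta else 1 - beta)
      = (\<Prod>j \<in> A. if j \<in> S then beta else 1 - beta)"
    using assms by (intro prod.cong) (auto simp: phi_def)
  also have "\<dots> = beta ^ card (A \<inter> S) * (1 - beta) ^ card (A - S)"
    using assms(1) by (simp add: prod.If_cases Diff_eq)
  also have "A \<inter> S = S" using assms by auto
  also have "card (A - S) = card A - card S" using assms by (simp add: card_Diff_subset finite_subset)
  finally show ?thesis .
qed

lemma exp_payoff_Pow:
  assumes "L \<noteq> H"
  shows "exp_payoff n L H beta i x =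
    (\<Sum>S \<in> Pow ({..<n} - {i}). beta ^ card S * (1 - beta) ^ (card ({..<n} - {i}) - card S)
        * bertrand_payoff n ((phi ({..<n} - {i}) L H S)(i := x)) i)"
proof -
  let ?A = "{..<n} - {i}"
  have "exp_payoff n L H beta i x = (\<Sum>S \<in> Pow ?A.
        (\<Prod>j \<in> ?A. if phi ?A L H S j = H then beta else 1 - beta)
        * bertrand_payoff n ((phi ?A L H S)(i := x)) i)"
    unfolding exp_payoff_def PiE_eq_phi[OF assms]
    by (subst sum.reindex[OF inj_phi[OF assms]]) simp
  also have "\<dots> = (\<Sum>S \<in> Pow ({..<n} - {i}). beta ^ card S * (1 - beta) ^ (card ({..<n} - {i}) - card S)
        * bertrand_payoff n ((phi ({..<n} - {i}) L H S)(i := x)) i)"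
    by (intro sum.cong refl, subst weight[OF _ _ assms]) auto
  finally show ?thesis .
qed

lemma Min_L:
  assumes "S \<subseteq> {..<n} - {i}" "i < n" "L < H" "L \<le> y"
    and "j < n" "((phi ({..<n} - {i}) L H S)(i := y)) j = L"
  shows "Min (((phi ({..<n} - {i}) L H S)(i := y)) ` {..<n}) = L"
proof (rule Min_eqI)
  show "finite (((phi ({..<n} - {i}) L H S)(i := y)) ` {..<n})" by simp
  fix z assume "z \<in> ((phi ({..<n} - {i}) L H S)(i := y)) ` {..<n}"
  then show "L \<le> z" using assms by (auto simp: phi_def)
next
  show "L \<in> ((phi ({..<n} - {i}) L H S)(i := y)) ` {..<n}"
    using assms(5) assms(6)[symmetric] by (metis image_eqI lessThan_iff)
qed

lemma pay_L:
  assumes "S \<subseteq> {..<n} - {i}" "i < n" "L < H"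
  shows "bertrand_payoff n ((phi ({..<n} - {i}) L H S)(i := L)) i = real_of_int L / real (n - card S)"
proof -
  let ?p = "(phi ({..<n} - {i}) L H S)(i := L)"
  have m: "Min (?p ` {..<n}) = L" by (rule Min_L[where j = i]) (use assms in auto)
  have "{j \<in> {..<n}. ?p j = L} = {..<n} - S" using assms by (auto simp: phi_def)
  moreover have "card ({..<n} - S) = n - card S" using assms
    by (subst card_Diff_subset) (auto intro: finite_subset)
  ultimately show ?thesis unfolding bertrand_payoff_def Let_def m by simp
qed

lemma pay_high:
  assumes "S \<subseteq> {..<n} - {i}" "i < n" "L < H" "L < y" "y \<le> H"
  shows "bertrand_payoff n ((phi ({..<n} - {i}) L H S)(i := y)) i =
     (if S = {..<n} - {i} then (if y = H then real_of_int H / real n else real_of_int y) else 0)"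
proof (cases "S = {..<n} - {i}")
  case False
  then obtain j where j: "j \<in> {..<n} - {i}" "j \<notin> S" using assms by blast
  let ?p = "(phi ({..<n} - {i}) L H S)(i := y)"
  have m: "Min (?p ` {..<n}) = L" by (rule Min_L[where j = j]) (use assms j in \<open>auto simp: phi_def\<close>)
  show ?thesis unfolding bertrand_payoff_def Let_def m using False assms by simp
next
  case True
  let ?p = "(phi ({..<n} - {i}) L H S)(i := y)"
  have m: "Min (?p ` {..<n}) = y" using assms True by (intro Min_eqI) (auto simp: phi_def)
  show ?thesis
  proof (cases "y = H")
    case True
    have "{j \<in> {..<n}. ?p j = y} = {..<n}" using assms \<open>S = _\<close> True by (auto simp: phi_def)
    then show ?thesis unfolding bertrand_payoff_def Let_def m using True \<open>S = _\<close> by simp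
  next
    case False
    have "{j \<in> {..<n}. ?p j = y} = {i}" using assms \<open>S = _\<close> False by (auto simp: phi_def)
    then show ?thesis unfolding bertrand_payoff_def Let_def m using False \<open>S = _\<close> by simp
  qed
qed

lemma group_card:
  assumes "finite A"
  shows "(\<Sum>S \<in> Pow A. (g (card S)::real)) = (\<Sum>k=0..card A. real (card A choose k) * g k)"
proof -
  have "(\<Sum>S \<in> Pow A. g (card S)) = (\<Sum>k\<in>{0..card A}. \<Sum>S\<in>{S. S \<in> Pow A \<and> card S = k}. g (card S))"
    using assms by (intro sum.group[symmetric]) (auto intro: card_mono)
  also have "\<dots> = (\<Sum>k\<in>{0..card A}. \<Sum>S\<in>{S. S \<subseteq> A \<and> card S = k}. g k)"
    by (intro sum.cong) auto
  also have "\<dots> = (\<Sum>k=0..card A. real (card A choose k) * g k)"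
    using n_subsets[OF assms] by simp
  finally show ?thesis .
qed
lemma card_A: "i < n \<Longrightarrow> card ({..<n} - {i}) = n - 1" by simp

lemma E_L:
  assumes "i < n" "L < H"
  shows "exp_payoff n L H beta i L = fB beta n * real_of_int L"
proof -
  let ?A = "{..<n} - {i}"
  have "exp_payoff n L H beta i L = (\<Sum>S \<in> Pow ?A. beta ^ card S * (1 - beta) ^ (n - 1 - card S)
        * (real_of_int L / real (n - card S)))"
    unfolding exp_payoff_Pow[of L H, OF order.strict_implies_not_eq[OF assms(2)]] card_A[OF assms(1)]
    by (intro sum.cong refl, subst pay_L) (use assms in auto)
  also have "\<dots> = (\<Sum>k=0..n-1. real ((n-1) choose k) * (beta ^ k * (1 - beta) ^ (n - 1 - k)
        * (real_of_int L / real (n - k))))"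
    using group_card[of ?A "\<lambda>k. beta ^ k * (1 - beta) ^ (n - 1 - k) * (real_of_int L / real (n - k))"]
    card_A[OF assms(1)] by simp
  also have "\<dots> = fB beta n * real_of_int L"
    unfolding fB_def sum_distrib_right by (intro sum.cong refl) simp
  finally show ?thesis .
qed

lemma E_high:
  assumes "i < n" "L < H" "L < y" "y \<le> H"
  shows "exp_payoff n L H beta i y = beta ^ (n - 1) * (if y = H then real_of_int H / real n else real_of_int y)"
proof -
  let ?A = "{..<n} - {i}"
  let ?c = "(if y = H then real_of_int H / real n else real_of_int y)"
  have "exp_payoff n L H beta i y = (\<Sum>S \<in> Pow ?A. if S = ?A then beta ^ card ?A * (1 - beta) ^ (card ?A - card ?A) * ?c else 0)"
    unfolding exp_payoff_Pow[of L H, OF order.strict_implies_not_eq[OF assms(2)]]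
    by (intro sum.cong refl, subst pay_high) (use assms in auto)
  also have "\<dots> = beta ^ card ?A * ?c" apply (subst sum.delta) apply simp_all done
  finally show ?thesis using card_A[OF assms(1)] by simp
qed

lemma fB_ge: assumes "n \<ge> 1" "0 \<le> beta" "beta \<le> 1" shows "beta ^ (n - 1) \<le> fB beta n"
proof -
  have "beta ^ (n-1) * (1 - beta) ^ (n - 1 - (n-1)) * real ((n - 1) choose (n-1)) * (1 / real (n - (n-1)))
        \<le> fB beta n"
    unfolding fB_def using assms by (intro member_le_sum) auto
  then show ?thesis using assms by simp
qed

theorem proposition3p4:
  fixes n :: nat and L H :: int and beta t :: real and i :: nat
  assumes "n \<ge> 2" and "L \<ge> 2" and "H > L"
    and "0 \<le> beta" and "beta \<le> 1" and "t \<ge> 0" and "i < n"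
  shows "coop_consistent n L H t beta i \<longleftrightarrow>
         t \<ge> max (beta ^ (n - 1) * (real_of_int H - 1)) (fB beta n * real_of_int L)
               - beta ^ (n - 1) * real_of_int H / real n"
proof -
  let ?E = "exp_payoff n L H beta i"
  let ?b = "beta ^ (n - 1)"
  have EH: "?E H = ?b * real_of_int H / real n" using E_high[of i n L H H beta] assms by simp
  have EL: "?E L = fB beta n * real_of_int L" using E_L assms by simp
  have Ey: "?E y = ?b * real_of_int y" if "L < y" "y < H" for y
    using E_high[of i n L H y beta] assms that by simp
  have bnn: "0 \<le> ?b" using assms by simp
  have fb: "?b \<le> fB beta n" using fB_ge assms by simp
  show ?thesis
  proof
    assume c: "coop_consistent n L H t beta i"
    then have cL: "?E L \<le> ?E H + t" using assms unfolding coop_consistent_def consistent_def by auto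
    have "?b * (real_of_int H - 1) \<le> ?E H + t"
    proof (cases "L < H - 1")
      case True
      then have "?E (H - 1) \<le> ?E H + t" using c assms unfolding coop_consistent_def consistent_def by auto
      then show ?thesis using Ey[of "H - 1"] True by simp
    next
      case False
      then have "H - 1 = L" using assms by simp
      then have "?b * (real_of_int H - 1) = ?b * real_of_int L" by simp
      also have "\<dots> \<le> fB beta n * real_of_int L" using fb assms by (intro mult_right_mono) auto
      finally show ?thesis using cL EL by simp
    qed
    then show "t \<ge> max (?b * (real_of_int H - 1)) (fB beta n * real_of_int L) - ?b * real_of_int H / real n"
      using cL EL EH by simp
  next
    assume h: "t \<ge> max (?b * (real_of_int H - 1)) (fB beta n * real_of_int L) - ?b * real_of_int H / real n"
    show "coop_consistent n L H t beta i" unfolding coop_consistent_def consistent_def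
    proof
      fix y assume y: "y \<in> {L..H}"
      consider "y = L" | "L < y \<and> y < H" | "y = H" using y by force
      then show "?E y \<le> ?E H + t"
      proof cases
        case 1 then show ?thesis using h EL EH by simp
      next
        case 2
        then have "real_of_int y \<le> real_of_int H - 1" by simp
        then have "?b * real_of_int y \<le> ?b * (real_of_int H - 1)" using bnn by (rule mult_left_mono)
        then show ?thesis using Ey[of y] 2 h EH by simp
      next
        case 3 then show ?thesis using assms by simp
      qed
    qed
  qed
qed

end
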